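(* For every prime power $q\equiv 1\pmod 4$, the signified graph $Tr(SP_q)$ is vertex-transitive, i.e. for any two vertices $x,y$ there is a sign-preserving automorphism of $Tr(SP_q)$ mapping $x$ to $y$.
   Context: A signified graph is a simple graph with each edge labelled positive or negative. Let $q\equiv 1\pmod 4$ be a prime power and $\mathbb{F}_q$ the field of order $q$; for $x\in\mathbb{F}_q^*$ let $\mathrm{sq}(x)=+1$ if $x$ is a square and $-1$ otherwise (note $-1$ is a square). The signified Paley graph $SP_q$ is the complete graph on vertex set $\mathbb{F}_q$ where the edge $xy$ is negative iff $\mathrm{sq}(y-x)=-1$. The Tromp signified Paley graph $Tr(SP_q)$ has vertex set $\{u_i : u\in\mathbb{F}_q\cup\{\infty\},\ i\in\{0,1\}\}$ ($2q+2$ vertices). For $u,v\in\mathbb{F}_q$ and $i,j\in\{0,1\}$ with $u\neq v$, $u_iv_j$ is an edge with sign $\mathrm{sq}(u-v)\cdot(-1)^{i+j}$; for $v\in\mathbb{F}_q$, $\infty_iv_j$ is an edge with sign $(-1)^{i+j}$; there are no other edges (in particular $u_0u_1$ is never an edge). Equivalently, $Tr(SP_q)$ is the anti-twinned graph of $SP_q$ with an added universal vertex $\infty$ joined positively to all vertices. An automorphism of a signified graph is a bijection of its vertex set mapping edges to edges of the same sign and non-edges to non-edges. *)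

theory Defs
  imports Main
begin

definition sq :: "'a::field \<Rightarrow> int" where
  "sq x = (if \<exists>y. y * y = x then 1 else -1)"

text \<open>Vertices of Tr(SP_q): pairs (u, i) with u in F_q plus infinity (None = infinity)
  and i in {0,1}, encoded as bool (False = 0, True = 1).\<close>
type_synonym 'a trvert = "'a option \<times> bool"

text \<open>(-1)^(i+j)\<close>
definition par :: "bool \<Rightarrow> bool \<Rightarrow> int" where
  "par i j = (if i = j then 1 else -1)"

fun tr_edge :: "'a trvert \<Rightarrow> 'a trvert \<Rightarrow> bool" where
  "tr_edge (Some u, i) (Some v, j) = (u \<noteq> v)"
| "tr_edge (None, i) (Some v, j) = True"
| "tr_edge (Some u, i) (None, j) = True"
| "tr_edge (None, i) (None, j) = False"

fun tr_sign :: "'a::field trvert \<Rightarrow> 'a trvert \<Rightarrow> int" where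
  "tr_sign (Some u, i) (Some v, j) = sq (u - v) * par i j"
| "tr_sign (None, i) (Some v, j) = par i j"
| "tr_sign (Some u, i) (None, j) = par i j"
| "tr_sign (None, i) (None, j) = 0"

definition tr_automorphism :: "('a::field trvert \<Rightarrow> 'a trvert) \<Rightarrow> bool" where
  "tr_automorphism f \<longleftrightarrow> bij f \<and>
     (\<forall>x y. tr_edge (f x) (f y) = tr_edge x y) \<and>
     (\<forall>x y. tr_edge x y \<longrightarrow> tr_sign (f x) (f y) = tr_sign x y)"

end

theory Submission
  imports Defs
begin


lemma div_sq: "(u::'a::field) \<noteq> 0 \<Longrightarrow> u*u*v = w*w \<Longrightarrow> (w/u)*(w/u) = v"
proof -
  assume u: "u \<noteq> 0" and e: "u*u*v = w*w"
  have "(w/u)*(w/u) = (w*w)/(u*u)" by simp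
  also have "\<dots> = (u*u*v)/(u*u)" by (simp only: e)
  also have "\<dots> = v" using u by simp
  finally show ?thesis .
qed

lemma invol_even:
  assumes "finite B" "\<forall>x\<in>B. g x \<in> B \<and> g x \<noteq> x \<and> g (g x) = x"
  shows "even (card B)"
  using assms
proof (induction "card B" arbitrary: B rule: less_induct)
  case less
  show ?case
  proof (cases "B = {}")
    case True then show ?thesis by simp
  next
    case False
    then obtain x where x: "x \<in> B" by blast
    let ?B' = "B - {x, g x}"
    have gx: "g x \<in> B" "g x \<noteq> x" using less.prems x by auto
    have c: "card B = card ?B' + 2"
    proof -
      have "{x, g x} \<subseteq> B" using x gx by auto
      then have "card ?B' = card B - card {x, g x}" using less.prems(1) by (simp add: card_Diff_subset)
      moreover have "card {x, g x} = 2" using gx by simp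
      moreover have "card {x, g x} \<le> card B" using \<open>{x, g x} \<subseteq> B\<close> less.prems(1) card_mono by blast
      ultimately show ?thesis by simp
    qed
    have "even (card ?B')"
    proof (rule less.hyps)
      show "card ?B' < card B" using c by simp
      show "finite ?B'" using less.prems(1) by simp
      show "\<forall>y\<in>?B'. g y \<in> ?B' \<and> g y \<noteq> y \<and> g (g y) = y"
      proof
        fix y assume y: "y \<in> ?B'"
        have h: "\<And>z. z \<in> B \<Longrightarrow> g z \<in> B \<and> g z \<noteq> z \<and> g (g z) = z"
          using less.prems(2) by blast
        have yB: "y \<in> B" "y \<noteq> x" "y \<noteq> g x" using y by auto
        have hy: "g y \<in> B" "g y \<noteq> y" "g (g y) = y" using h[OF yB(1)] by auto
        have hx: "g (g x) = x" using h[OF x] by auto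
        have "g y \<noteq> x" using hy(3) yB(3) by auto
        moreover have "g y \<noteq> g x" using hy(3) hx yB(2) by metis
        ultimately show "g y \<in> ?B' \<and> g y \<noteq> y \<and> g (g y) = y" using hy by auto
      qed
    qed
    then show ?thesis using c by simp
  qed
qed

context
  fixes dummy :: "'a::{field,finite}"
  assumes H: "card (UNIV :: 'a set) mod 4 = 1"
begin

lemma two_nz: "(1::'a) + 1 \<noteq> 0"
proof
  assume h: "(1::'a) + 1 = 0"
  have P: "\<forall>x\<in>(UNIV :: 'a set). x + 1 \<in> UNIV \<and> x + 1 \<noteq> x \<and> x + 1 + 1 = x"
  proof
    fix x :: 'a
    assume "x \<in> UNIV"
    have "x + 1 + 1 = x + (1 + 1)" by (simp only: add.assoc)
    also have "\<dots> = x" by (simp only: h add_0_right)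
    finally show "x + 1 \<in> UNIV \<and> x + 1 \<noteq> x \<and> x + 1 + 1 = x" by simp
  qed
  have "even (card (UNIV :: 'a set))"
    by (rule invol_even[OF _ P]) simp
  then show False using H by presburger
qed

lemma neg_ne: "(x::'a) \<noteq> 0 \<Longrightarrow> - x \<noteq> x"
proof
  assume x0: "x \<noteq> 0" and e: "- x = x"
  have "- x + x = 0" by (rule left_minus)
  then have "x + x = 0" by (simp only: e)
  then have "x * (1 + 1) = 0" by (simp only: distrib_left mult_1_right)
  then show False using two_nz x0 by simp
qed

definition SQ :: "'a set" where "SQ = {x. x \<noteq> 0 \<and> (\<exists>y. y * y = x)}"

lemma sq_roots: "(y::'a) * y = r * r \<longleftrightarrow> y = r \<or> y = - r"
proof -
  have f: "y * y - r * r = (y - r) * (y + r)" by (simp add: algebra_simps)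
  have "y * y = r * r \<longleftrightarrow> y * y - r * r = 0" by (rule eq_iff_diff_eq_0)
  also have "\<dots> \<longleftrightarrow> (y - r) * (y + r) = 0" by (simp only: f)
  also have "\<dots> \<longleftrightarrow> y - r = 0 \<or> y + r = 0" by (rule mult_eq_0_iff)
  also have "\<dots> \<longleftrightarrow> y = r \<or> y = - r" by (auto simp: add_eq_0_iff minus_equation_iff[of r y])
  finally show ?thesis .
qed

lemma card_SQ: "2 * card SQ = card (UNIV :: 'a set) - 1"
proof -
  have U: "UNIV - {0::'a} = (\<Union>s\<in>SQ. {y. y * y = s})"
    unfolding SQ_def by auto
  have "card (\<Union>s\<in>SQ. {y. y * y = s}) = (\<Sum>s\<in>SQ. card {y::'a. y * y = s})"
    by (rule card_UN_disjoint) auto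
  also have "\<dots> = (\<Sum>s\<in>SQ. 2)"
  proof (rule sum.cong)
    fix s assume "s \<in> SQ"
    then obtain r where r: "r * r = s" "r \<noteq> 0" unfolding SQ_def by auto
    have "{y. y * y = s} = {r, - r}" using sq_roots r by auto
    then show "card {y. y * y = s} = 2" using neg_ne[OF r(2)] by auto
  qed simp
  finally have "card (UNIV - {0::'a}) = 2 * card SQ" using U by simp
  moreover have "card (UNIV - {0::'a}) = card (UNIV::'a set) - 1"
    by (rule card_Diff_singleton) simp
  ultimately show ?thesis by linarith
qed

lemma minus_one_sq: "\<exists>y::'a. y * y = -1"
proof (rule ccontr)
  assume n: "\<not> ?thesis"
  have "even (card (SQ - {1}))"
  proof (rule invol_even[where g = inverse])
    show "finite (SQ - {1})" by simp
    show "\<forall>x\<in>SQ - {1}. inverse x \<in> SQ - {1} \<and> inverse x \<noteq> x \<and> inverse (inverse x) = x"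
    proof
      fix x assume x: "x \<in> SQ - {1}"
      then obtain y where y: "y * y = x" "x \<noteq> 0" "x \<noteq> 1" unfolding SQ_def by auto
      have "inverse y * inverse y = inverse x" using y(1) by (metis inverse_mult_distrib)
      then have "inverse x \<in> SQ" using y unfolding SQ_def by auto
      moreover have "inverse x \<noteq> 1" using y by auto
      moreover have "inverse x \<noteq> x"
      proof
        assume "inverse x = x"
        then have "x * x = 1 * 1" using y(2) by (metis mult.right_neutral right_inverse)
        then have "x = 1 \<or> x = -1" using sq_roots by blast
        then show False using y n by auto
      qed
      ultimately show "inverse x \<in> SQ - {1} \<and> inverse x \<noteq> x \<and> inverse (inverse x) = x" by simp
    qed
  qed
  moreover have "(1::'a) \<noteq> 0 \<and> (\<exists>y. y * y = (1::'a))" by (metis one_neq_zero mult_1)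
  then have "1 \<in> SQ" by (simp add: SQ_def)
  then have "card SQ = card (SQ - {1}) + 1"
    by (metis card_Diff_singleton card_gt_0_iff empty_iff finite Suc_pred' Suc_eq_plus1)
  moreover have "even (card SQ)" using card_SQ H by presburger
  ultimately show False by simp
qed

lemma sq_uminus: "sq (- (x::'a)) = sq x"
proof -
  obtain c :: 'a where c: "c * c = -1" using minus_one_sq by blast
  have "(\<exists>y. y * y = - x) \<longleftrightarrow> (\<exists>y. y * y = x)"
  proof
    assume "\<exists>y. y * y = - x" then obtain y where "y * y = - x" by blast
    then have "(c*y) * (c*y) = x"
    proof -
      have "(c*y)*(c*y) = (c*c)*(y*y)" by (simp add: algebra_simps)
      then show ?thesis using c \<open>y * y = - x\<close> by simp
    qed
    then show "\<exists>y. y * y = x" by blast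
  next
    assume "\<exists>y. y * y = x" then obtain y where "y * y = x" by blast
    then have "(c*y) * (c*y) = - x"
    proof -
      have "(c*y)*(c*y) = (c*c)*(y*y)" by (simp add: algebra_simps)
      then show ?thesis using c \<open>y * y = x\<close> by simp
    qed
    then show "\<exists>y. y * y = - x" by blast
  qed
  then show ?thesis unfolding sq_def by simp
qed

lemma nonsq_mult: 
  assumes a: "a \<noteq> 0" "\<not> (\<exists>y. y * y = (a::'a))" and b: "b \<noteq> 0" "\<not> (\<exists>y. y * y = b)"
  shows "\<exists>y. y * y = a * b"
proof -
  let ?N = "(UNIV - {0}) - SQ"
  have SQs: "SQ \<subseteq> UNIV - {0}" unfolding SQ_def by auto
  have cN: "card ?N = card SQ" using card_SQ SQs
    by (simp add: card_Diff_subset card_Diff_singleton)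
  have sub: "(\<lambda>s. a * s) ` SQ \<subseteq> ?N"
  proof
    fix z assume "z \<in> (\<lambda>s. a * s) ` SQ"
    then obtain s r where s: "z = a * s" "r * r = s" "s \<noteq> 0" unfolding SQ_def by auto
    have "z \<notin> SQ"
    proof
      assume "z \<in> SQ"
      then obtain t where "t * t = z" unfolding SQ_def by auto
      then have "r * r * a = t * t" using s by (simp add: mult.commute)
      then have "(t / r) * (t / r) = a" using div_sq s(3) \<open>r * r = s\<close> by (metis mult_zero_left)
      then show False using a by blast
    qed
    then show "z \<in> ?N" using s a by auto
  qed
  have "card ((\<lambda>s. a * s) ` SQ) = card SQ"
    by (rule card_image) (simp add: inj_on_def a)
  then have eq: "(\<lambda>s. a * s) ` SQ = ?N" using card_subset_eq[OF _ sub] cN by simp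
  have "b \<in> ?N" using b unfolding SQ_def by auto
  then obtain s where s: "s \<in> SQ" "b = a * s" using eq by blast
  then obtain r where "r * r = s" unfolding SQ_def by auto
  then have "(a * r) * (a * r) = a * b" using s by (simp add: algebra_simps)
  then show ?thesis by blast
qed

lemma sq_mult: "(a::'a) \<noteq> 0 \<Longrightarrow> b \<noteq> 0 \<Longrightarrow> sq (a * b) = sq a * sq b"
proof -
  assume a: "a \<noteq> 0" and b: "b \<noteq> 0"
  have div: "\<And>u v w. (u::'a) \<noteq> 0 \<Longrightarrow> u * u * v = w * w \<Longrightarrow> (w / u) * (w / u) = v"
    by (rule div_sq)
  show ?thesis
  proof (cases "\<exists>y. y * y = a"; cases "\<exists>y. y * y = b")
    assume A: "\<exists>y. y * y = a" and B: "\<exists>y. y * y = b"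
    then obtain r s where "r * r = a" "s * s = b" by blast
    then have "(r*s)*(r*s) = a * b" by (simp add: algebra_simps)
    then show ?thesis using A B unfolding sq_def by auto
  next
    assume A: "\<exists>y. y * y = a" and B: "\<not> (\<exists>y. y * y = b)"
    then obtain r where r: "r * r = a" by blast
    have "\<not> (\<exists>y. y * y = a * b)"
    proof
      assume "\<exists>y. y * y = a * b" then obtain w where "w * w = a * b" by blast
      then have "(w / r) * (w / r) = b" using div[of r b w] r a by auto
      then show False using B by blast
    qed
    then show ?thesis using A B unfolding sq_def by auto
  next
    assume A: "\<not> (\<exists>y. y * y = a)" and B: "\<exists>y. y * y = b"
    then obtain r where r: "r * r = b" by blast
    have "\<not> (\<exists>y. y * y = a * b)"
    proof
      assume "\<exists>y. y * y = a * b" then obtain w where "w * w = a * b" by blast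
      then have "(w / r) * (w / r) = a" using div[of r a w] r b by (auto simp: mult.commute)
      then show False using A by blast
    qed
    then show ?thesis using A B unfolding sq_def by auto
  next
    assume A: "\<not> (\<exists>y. y * y = a)" and B: "\<not> (\<exists>y. y * y = b)"
    then show ?thesis using nonsq_mult[OF a A b B] unfolding sq_def by auto
  qed
qed

end

lemma sq_inverse: "sq (inverse (x::'a::field)) = sq x"
proof -
  have "(\<exists>y. y * y = inverse x) \<longleftrightarrow> (\<exists>y. y * y = x)"
    by (metis inverse_inverse_eq inverse_mult_distrib)
  then show ?thesis unfolding sq_def by simp
qed



lemma auto_inv:
  assumes "tr_automorphism f" shows "tr_automorphism (inv f)"
proof -
  have b: "bij f" and e: "\<And>x y. tr_edge (f x) (f y) = tr_edge x y"
    and s: "\<And>x y. tr_edge x y \<Longrightarrow> tr_sign (f x) (f y) = tr_sign x y"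
    using assms unfolding tr_automorphism_def by auto
  have fi: "\<And>x. f (inv f x) = x" using b by (simp add: bij_is_surj surj_f_inv_f)
  show ?thesis unfolding tr_automorphism_def
  proof (intro conjI allI impI)
    show "bij (inv f)" using b by (simp add: bij_imp_bij_inv)
    fix x y
    show "tr_edge (inv f x) (inv f y) = tr_edge x y" using e[of "inv f x" "inv f y"] fi by simp
    assume "tr_edge x y"
    then have "tr_edge (inv f x) (inv f y)" using e[of "inv f x" "inv f y"] fi by simp
    then show "tr_sign (inv f x) (inv f y) = tr_sign x y" using s fi by metis
  qed
qed

lemma auto_comp:
  assumes "tr_automorphism f" "tr_automorphism g" shows "tr_automorphism (g \<circ> f)"
proof -
  have f: "bij f" "\<And>x y. tr_edge (f x) (f y) = tr_edge x y"
    "\<And>x y. tr_edge x y \<Longrightarrow> tr_sign (f x) (f y) = tr_sign x y"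
    using assms(1) unfolding tr_automorphism_def by auto
  have g: "bij g" "\<And>x y. tr_edge (g x) (g y) = tr_edge x y"
    "\<And>x y. tr_edge x y \<Longrightarrow> tr_sign (g x) (g y) = tr_sign x y"
    using assms(2) unfolding tr_automorphism_def by auto
  have "bij (g \<circ> f)" using f(1) g(1) by (rule bij_comp)
  moreover have "tr_edge ((g \<circ> f) x) ((g \<circ> f) y) = tr_edge x y" for x y
    using f(2) g(2) by simp
  moreover have "tr_sign ((g \<circ> f) x) ((g \<circ> f) y) = tr_sign x y" if "tr_edge x y" for x y
  proof -
    have "tr_edge (f x) (f y)" using that f(2) by simp
    then have "tr_sign (g (f x)) (g (f y)) = tr_sign (f x) (f y)" by (rule g(3))
    also have "\<dots> = tr_sign x y" using that by (rule f(3))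
    finally show ?thesis by simp
  qed
  ultimately show ?thesis unfolding tr_automorphism_def by blast
qed

fun trans :: "'a::field \<Rightarrow> 'a trvert \<Rightarrow> 'a trvert" where
  "trans a (Some u, i) = (Some (u + a), i)"
| "trans a (None, i) = (None, i)"

fun flip :: "'a trvert \<Rightarrow> 'a trvert" where
  "flip (v, i) = (v, \<not> i)"

lemma trvert_cases: obtains i where "x = (None, i)" | u i where "x = (Some u, i)"
  by (metis option.exhaust prod.exhaust)

lemma auto_trans: "tr_automorphism (trans (a::'a::field))"
proof -
  have t1: "trans a (trans (-a) x) = x" for x
    by (cases x rule: trvert_cases) auto
  have t2: "trans (-a) (trans a x) = x" for x
    by (cases x rule: trvert_cases) auto
  have "trans a \<circ> trans (-a) = id" "trans (-a) \<circ> trans a = id"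
    using t1 t2 by (auto simp: fun_eq_iff)
  then have "bij (trans a)" using o_bij by blast
  moreover have "tr_edge (trans a x) (trans a y) = tr_edge x y" for x y
    by (cases x rule: trvert_cases; cases y rule: trvert_cases) auto
  moreover have "tr_sign (trans a x) (trans a y) = tr_sign x y" for x y
    by (cases x rule: trvert_cases; cases y rule: trvert_cases) auto
  ultimately show ?thesis unfolding tr_automorphism_def by auto
qed

lemma par_not: "par (\<not> i) (\<not> j) = par i j" "par i (\<not> j) = - par i j" "par (\<not> i) j = - par i j"
  unfolding par_def by auto

lemma auto_flip: "tr_automorphism (flip :: 'a::field trvert \<Rightarrow> _)"
proof -
  have "bij (flip :: 'a trvert \<Rightarrow> _)" 
  proof (rule involuntory_imp_bij)
    fix x :: "'a trvert" show "flip (flip x) = x" by (cases x) simp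
  qed
  moreover have "tr_edge (flip x) (flip y) = tr_edge x y" for x y :: "'a trvert"
    by (cases x rule: trvert_cases; cases y rule: trvert_cases) auto
  moreover have "tr_sign (flip x) (flip y) = tr_sign x y" for x y :: "'a trvert"
    by (cases x rule: trvert_cases; cases y rule: trvert_cases) (auto simp: par_not)
  ultimately show ?thesis unfolding tr_automorphism_def by auto
qed

definition fl :: "'a::field \<Rightarrow> bool \<Rightarrow> bool" where
  "fl u i = (if sq u = 1 then i else \<not> i)"

fun phi :: "'a::field trvert \<Rightarrow> 'a trvert" where
  "phi (None, i) = (Some 0, i)"
| "phi (Some u, i) = (if u = 0 then (None, i) else (Some (- inverse u), fl u i))"

lemma sq_pm: "sq x = 1 \<or> sq x = -1" unfolding sq_def by auto

lemma par_fl: "par (fl u i) j = sq u * par i j" "par i (fl u j) = sq u * par i j"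
  unfolding fl_def using sq_pm[of u] by (auto simp: par_not)

lemma sq_sq: "sq x * sq x = 1" using sq_pm[of x] by auto

lemma auto_phi:
  assumes H: "card (UNIV :: 'a::{field,finite} set) mod 4 = 1"
  shows "tr_automorphism (phi :: 'a trvert \<Rightarrow> _)"
proof -
  have ninv: "sq (- inverse u) = sq u" for u :: 'a using sq_uminus[OF H] sq_inverse by simp
  have flfl: "fl (- inverse u) (fl u i) = i" for u :: 'a and i
    unfolding fl_def ninv by auto
  have "bij (phi :: 'a trvert \<Rightarrow> _)"
  proof (rule involuntory_imp_bij)
    fix x :: "'a trvert" show "phi (phi x) = x"
      by (cases x rule: trvert_cases) (auto simp: flfl)
  qed
  moreover have "tr_edge (phi x) (phi y) = tr_edge x y" for x y :: "'a trvert"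
    by (cases x rule: trvert_cases; cases y rule: trvert_cases) auto
  moreover have "tr_sign (phi x) (phi y) = tr_sign x y" if "tr_edge x y" for x y :: "'a trvert"
  proof (cases x rule: trvert_cases)
    case (1 i)
    then show ?thesis
    proof (cases y rule: trvert_cases)
      case (1 j) then show ?thesis using \<open>tr_edge x y\<close> \<open>x = _\<close> by simp
    next
      case (2 v j)
      show ?thesis
      proof (cases "v = 0")
        case True then show ?thesis using 2 \<open>x = _\<close> by simp
      next
        case False
        have "sq (0 - - inverse v) = sq v" using sq_inverse by simp
        then show ?thesis using 2 \<open>x = _\<close> False by (simp add: par_fl mult.assoc[symmetric] sq_sq)
      qed
    qed
  next
    case (2 u i)
    then show ?thesis
    proof (cases y rule: trvert_cases)
      case (1 j)
      show ?thesis
      proof (cases "u = 0")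
        case True then show ?thesis using 1 \<open>x = _\<close> by simp
      next
        case False
        then show ?thesis using 1 \<open>x = _\<close> False by (simp add: par_fl ninv mult.assoc[symmetric] sq_sq)
      qed
    next
      case (2 v j)
      have uv: "u \<noteq> v" using \<open>tr_edge x y\<close> 2 \<open>x = (Some u, i)\<close> by simp
      show ?thesis
      proof (cases "u = 0")
        case True
        then have "v \<noteq> 0" using uv by simp
        then show ?thesis using 2 \<open>x = _\<close> True
          by (simp add: par_fl sq_uminus[OF H])
      next
        case u0: False
        show ?thesis
        proof (cases "v = 0")
          case True
          then show ?thesis using 2 \<open>x = _\<close> u0 by (simp add: par_fl)
        next
          case v0: False
          have "- inverse u - - inverse v = (u - v) * (inverse u * inverse v)"
            using u0 v0 by (simp add: field_simps)
          moreover have "sq ((u - v) * (inverse u * inverse v)) = sq (u - v) * (sq u * sq v)"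
          proof -
            have "u - v \<noteq> 0" "inverse u \<noteq> 0" "inverse v \<noteq> 0" "inverse u * inverse v \<noteq> 0"
              using u0 v0 uv by auto
            then have "sq ((u - v) * (inverse u * inverse v)) = sq (u - v) * (sq (inverse u) * sq (inverse v))"
              using sq_mult[OF H] by metis
            then show ?thesis by (simp only: sq_inverse)
          qed
          ultimately have "sq (- inverse u - - inverse v) = sq (u - v) * (sq u * sq v)" by simp
          then show ?thesis using 2 \<open>x = _\<close> u0 v0
            apply (simp add: par_fl)
            by (metis (no_types, lifting) mult.assoc mult.commute mult.right_neutral sq_sq)
        qed
      qed
    qed
  qed
  ultimately show ?thesis unfolding tr_automorphism_def by auto
qed


lemma auto_id: "tr_automorphism id" unfolding tr_automorphism_def by simp

lemma auto_ifflip: "tr_automorphism (if i then flip else id)"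
  by (cases i) (simp_all add: auto_flip auto_id)

theorem mainTheorem5:
  fixes x y :: "('a::{field,finite}) trvert"
  assumes "card (UNIV :: 'a set) mod 4 = 1"
  shows "\<exists>f. tr_automorphism f \<and> f x = y"
proof -
  have reach: "\<exists>f. tr_automorphism f \<and> f z = (Some 0, False)" for z :: "'a trvert"
  proof (cases z rule: trvert_cases)
    case (1 i)
    let ?f = "phi \<circ> (if i then flip else id) :: 'a trvert \<Rightarrow> 'a trvert"
    have "tr_automorphism ?f"
      using auto_comp[OF auto_ifflip[of i] auto_phi[OF assms]] .
    moreover have "?f z = (Some 0, False)" using 1 by auto
    ultimately show ?thesis by blast
  next
    case (2 u i)
    let ?f = "(if i then flip else id) \<circ> trans (- u) :: 'a trvert \<Rightarrow> 'a trvert"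
    have "tr_automorphism ?f"
      using auto_comp[OF auto_trans[of "- u"] auto_ifflip[of i]] .
    moreover have "?f z = (Some 0, False)" using 2 by auto
    ultimately show ?thesis by blast
  qed
  obtain f where f: "tr_automorphism f" "f x = (Some 0, False)" using reach by blast
  obtain g where g: "tr_automorphism g" "g y = (Some 0, False)" using reach by blast
  have "tr_automorphism (inv g \<circ> f)" using auto_comp[OF f(1) auto_inv[OF g(1)]] .
  moreover have "(inv g \<circ> f) x = y"
  proof -
    have "inj g" using g(1) unfolding tr_automorphism_def by (simp add: bij_is_inj)
    then have "inv g (g y) = y" by (rule inv_f_f)
    then show ?thesis using f(2) g(2) by simp
  qed
  ultimately show ?thesis by blast
qed

end
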